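(* Let $\sigma:\mathbb{R}\to\mathbb{R}$ be an increasing odd homeomorphism. If $A\subset\mathbb{R}^2$ is invariant under $h_\sigma$ and $v_\sigma$ (i.e. $h_\sigma^{\pm1}(A)\subset A$ and $v_\sigma^{\pm1}(A)\subset A$), then $A_+=A\cap\mathbb{R}_{\geq0}^2$ satisfies $E_\sigma^{-1}(A_+)=A_+$.
   Context: $h_\sigma(x,y)=(x+\sigma^{-1}(y),y)$, $v_\sigma(x,y)=(x,\sigma(x)+y)$. The generalized Euclidean algorithm is $E_\sigma:\mathbb{R}_{\geq0}^2\to\mathbb{R}_{\geq0}^2$, $E_\sigma(x,y)=(x-\sigma^{-1}(y),y)$ if $y<\sigma(x)$ and $E_\sigma(x,y)=(x,y-\sigma(x))$ if $y\geq\sigma(x)$. *)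

theory Defs
  imports "HOL-Analysis.Analysis"
begin

definition h_map :: "(real \<Rightarrow> real) \<Rightarrow> real \<times> real \<Rightarrow> real \<times> real" where
  "h_map \<sigma> p = (fst p + inv \<sigma> (snd p), snd p)"

definition h_inv_map :: "(real \<Rightarrow> real) \<Rightarrow> real \<times> real \<Rightarrow> real \<times> real" where
  "h_inv_map \<sigma> p = (fst p - inv \<sigma> (snd p), snd p)"

definition v_map :: "(real \<Rightarrow> real) \<Rightarrow> real \<times> real \<Rightarrow> real \<times> real" where
  "v_map \<sigma> p = (fst p, \<sigma> (fst p) + snd p)"

definition v_inv_map :: "(real \<Rightarrow> real) \<Rightarrow> real \<times> real \<Rightarrow> real \<times> real" where
  "v_inv_map \<sigma> p = (fst p, snd p - \<sigma> (fst p))"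

definition nonneg_quadrant :: "(real \<times> real) set" where
  "nonneg_quadrant = {p. fst p \<ge> 0 \<and> snd p \<ge> 0}"

text \<open>Generalized Euclidean algorithm (meaningful on the nonnegative quadrant).\<close>
definition E_map :: "(real \<Rightarrow> real) \<Rightarrow> real \<times> real \<Rightarrow> real \<times> real" where
  "E_map \<sigma> p = (if snd p < \<sigma> (fst p) then (fst p - inv \<sigma> (snd p), snd p)
                 else (fst p, snd p - \<sigma> (fst p)))"

end

theory Submission
  imports Defs
begin

theorem lemma9:
  fixes \<sigma> :: "real \<Rightarrow> real" and A :: "(real \<times> real) set"
  assumes "strict_mono \<sigma>"
    and "\<And>x. \<sigma> (- x) = - \<sigma> x"
    and "homeomorphism UNIV UNIV \<sigma> (inv \<sigma>)"
    and "h_map \<sigma> ` A \<subseteq> A" and "h_inv_map \<sigma> ` A \<subseteq> A"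
    and "v_map \<sigma> ` A \<subseteq> A" and "v_inv_map \<sigma> ` A \<subseteq> A"
  shows "{p \<in> nonneg_quadrant. E_map \<sigma> p \<in> A \<inter> nonneg_quadrant} = A \<inter> nonneg_quadrant"
proof -
  have si: "\<And>y. \<sigma> (inv \<sigma> y) = y" using assms(3) unfolding homeomorphism_def by auto
  show ?thesis
  proof (intro set_eqI iffI)
    fix p assume "p \<in> {p \<in> nonneg_quadrant. E_map \<sigma> p \<in> A \<inter> nonneg_quadrant}"
    then have q: "p \<in> nonneg_quadrant" and e: "E_map \<sigma> p \<in> A" by auto
    show "p \<in> A \<inter> nonneg_quadrant"
    proof (cases "snd p < \<sigma> (fst p)")
      case True
      then have "h_map \<sigma> (E_map \<sigma> p) = p" by (simp add: E_map_def h_map_def)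
      then show ?thesis using e q assms(4) by (metis IntI image_subset_iff)
    next
      case False
      then have "v_map \<sigma> (E_map \<sigma> p) = p" by (simp add: E_map_def v_map_def)
      then show ?thesis using e q assms(6) by (metis IntI image_subset_iff)
    qed
  next
    fix p assume p: "p \<in> A \<inter> nonneg_quadrant"
    show "p \<in> {p \<in> nonneg_quadrant. E_map \<sigma> p \<in> A \<inter> nonneg_quadrant}"
    proof (cases "snd p < \<sigma> (fst p)")
      case True
      then have "\<sigma> (inv \<sigma> (snd p)) < \<sigma> (fst p)" by (simp add: si)
      then have "inv \<sigma> (snd p) < fst p" using assms(1) strict_mono_less by blast
      moreover have "E_map \<sigma> p = h_inv_map \<sigma> p" using True by (simp add: E_map_def h_inv_map_def)
      ultimately show ?thesis using p assms(5)
        by (auto simp: nonneg_quadrant_def h_inv_map_def)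
    next
      case False
      have "E_map \<sigma> p = v_inv_map \<sigma> p" using False by (simp add: E_map_def v_inv_map_def)
      then show ?thesis using p assms(7) False
        by (auto simp: nonneg_quadrant_def v_inv_map_def)
    qed
  qed
qed

end
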